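(* Let $G$ be a simple graph with $n$ vertices. Then $\gamma(G)=n-1$ if and only if $G$ is isomorphic to the path $P_n$ on $n$ vertices.
   Context: For a graph $G$ with vertex set $V$, let $X_G=\{x_u\mid u\in V\}$ be indeterminates and $L(G,X_G)$ the matrix with $L_{u,u}=x_u$ and $L_{u,v}=-m_{uv}$ ($u\neq v$), $m_{uv}$ the number of edges between $u$ and $v$. The $j$-critical ideal $I_j(G,X_G)\subseteq\mathbb{Z}[X_G]$ is generated by all $j\times j$ minors of $L(G,X_G)$. The algebraic co-rank is $\gamma(G)=\max\{j\mid I_j(G,X_G)=\mathbb{Z}[X_G]\}$. *)

theory Defs
  imports "HOL-Library.Poly_Mapping" "Jordan_Normal_Form.Determinant" "Jordan_Normal_Form.DL_Submatrix"
begin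

text \<open>Multivariate integer polynomials Z[x_0, x_1, ...] : monomials are finitely supported
  exponent vectors, polynomials finitely supported coefficient maps.\<close>
type_synonym zpoly = "(nat \<Rightarrow>\<^sub>0 nat) \<Rightarrow>\<^sub>0 int"

definition Var :: "nat \<Rightarrow> zpoly" where
  "Var u = Poly_Mapping.single (Poly_Mapping.single u 1) 1"

definition ideal_gen :: "'r::comm_ring_1 set \<Rightarrow> 'r set" where
  "ideal_gen S = {\<Sum>a\<in>A. c a * a | A c. finite A \<and> A \<subseteq> S}"

definition simple_graph :: "nat \<Rightarrow> (nat \<Rightarrow> nat \<Rightarrow> bool) \<Rightarrow> bool" where
  "simple_graph n E \<longleftrightarrow> (\<forall>u<n. \<forall>v<n. E u v \<longrightarrow> E v u) \<and> (\<forall>u<n. \<not> E u u)"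

definition gen_laplacian :: "nat \<Rightarrow> (nat \<Rightarrow> nat \<Rightarrow> bool) \<Rightarrow> zpoly mat" where
  "gen_laplacian n E = mat n n (\<lambda>(u,v). if u = v then Var u else if E u v then -1 else 0)"

definition minors :: "'r::comm_ring_1 mat \<Rightarrow> nat \<Rightarrow> 'r set" where
  "minors A j = {det (submatrix A I J) | I J. I \<subseteq> {0..<dim_row A} \<and> J \<subseteq> {0..<dim_col A}
                  \<and> card I = j \<and> card J = j}"

definition critical_ideal :: "nat \<Rightarrow> (nat \<Rightarrow> nat \<Rightarrow> bool) \<Rightarrow> nat \<Rightarrow> zpoly set" where
  "critical_ideal n E j = ideal_gen (minors (gen_laplacian n E) j)"

definition alg_corank :: "nat \<Rightarrow> (nat \<Rightarrow> nat \<Rightarrow> bool) \<Rightarrow> nat" where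
  "alg_corank n E = (GREATEST j. critical_ideal n E j = UNIV)"

definition path_graph :: "nat \<Rightarrow> nat \<Rightarrow> bool" where
  "path_graph u v \<longleftrightarrow> u + 1 = v \<or> v + 1 = u"

definition graph_iso :: "nat \<Rightarrow> (nat \<Rightarrow> nat \<Rightarrow> bool) \<Rightarrow> (nat \<Rightarrow> nat \<Rightarrow> bool) \<Rightarrow> bool" where
  "graph_iso n E F \<longleftrightarrow> (\<exists>f. bij_betw f {0..<n} {0..<n} \<and>
      (\<forall>u<n. \<forall>v<n. E u v \<longleftrightarrow> F (f u) (f v)))"

end

theory Submission
  imports Defs "HOL-Library.Z2"
begin

definition mon :: "(nat \<Rightarrow> 'a::comm_ring_1) \<Rightarrow> (nat \<Rightarrow>\<^sub>0 nat) \<Rightarrow> 'a" where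
  "mon x m = (\<Prod>i\<in>Poly_Mapping.keys m. x i ^ Poly_Mapping.lookup m i)"

definition ev :: "(nat \<Rightarrow> 'a::comm_ring_1) \<Rightarrow> zpoly \<Rightarrow> 'a" where
  "ev x p = (\<Sum>m\<in>Poly_Mapping.keys p. of_int (Poly_Mapping.lookup p m) * mon x m)"

lemma mon_superset: "finite S \<Longrightarrow> Poly_Mapping.keys m \<subseteq> S \<Longrightarrow> mon x m = (\<Prod>i\<in>S. x i ^ Poly_Mapping.lookup m i)"
  unfolding mon_def
  by (rule prod.mono_neutral_left) (auto simp: in_keys_iff)

lemma mon_add: "mon x (m + m') = mon x m * mon x m'"
proof -
  let ?S = "Poly_Mapping.keys m \<union> Poly_Mapping.keys m'"
  have "mon x (m + m') = (\<Prod>i\<in>?S. x i ^ Poly_Mapping.lookup (m + m') i)"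
    by (rule mon_superset) (auto simp: keys_add)
  also have "\<dots> = (\<Prod>i\<in>?S. x i ^ Poly_Mapping.lookup m i) * (\<Prod>i\<in>?S. x i ^ Poly_Mapping.lookup m' i)"
    by (simp add: lookup_add power_add prod.distrib)
  also have "\<dots> = mon x m * mon x m'"
    using mon_superset[of ?S m x] mon_superset[of ?S m' x] by simp
  finally show ?thesis .
qed

lemma mon_zero[simp]: "mon x 0 = 1" by (simp add: mon_def)

lemma ev_superset: "finite S \<Longrightarrow> Poly_Mapping.keys p \<subseteq> S \<Longrightarrow> ev x p = (\<Sum>m\<in>S. of_int (Poly_Mapping.lookup p m) * mon x m)"
  unfolding ev_def
  by (rule sum.mono_neutral_left) (auto simp: in_keys_iff)

lemma ev_add: "ev x (p + q) = ev x p + ev x q"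
proof -
  let ?S = "Poly_Mapping.keys p \<union> Poly_Mapping.keys q"
  have "ev x (p + q) = (\<Sum>m\<in>?S. of_int (Poly_Mapping.lookup (p + q) m) * mon x m)"
    by (rule ev_superset) (auto simp: keys_add)
  also have "\<dots> = (\<Sum>m\<in>?S. of_int (Poly_Mapping.lookup p m) * mon x m) + (\<Sum>m\<in>?S. of_int (Poly_Mapping.lookup q m) * mon x m)"
    by (simp add: lookup_add distrib_right sum.distrib)
  also have "\<dots> = ev x p + ev x q"
    using ev_superset[of ?S p x] ev_superset[of ?S q x] by simp
  finally show ?thesis .
qed

lemma ev_zero[simp]: "ev x 0 = 0" by (simp add: ev_def)

lemma ev_sum: "ev x (\<Sum>i\<in>A. f i) = (\<Sum>i\<in>A. ev x (f i))"
  by (induction A rule: infinite_finite_induct) (auto simp: ev_add)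

lemma ev_single: "ev x (Poly_Mapping.single m c) = of_int c * mon x m"
  by (simp add: ev_def)

lemma pm_decomp: "p = (\<Sum>m\<in>Poly_Mapping.keys p. Poly_Mapping.single m (Poly_Mapping.lookup p m))"
proof (rule poly_mapping_eqI)
  fix k
  have "poly_mapping.lookup (\<Sum>m\<in>Poly_Mapping.keys p. Poly_Mapping.single m (Poly_Mapping.lookup p m)) k
     = (\<Sum>m\<in>Poly_Mapping.keys p. (if m = k then Poly_Mapping.lookup p m else 0))"
    by (simp add: lookup_sum lookup_single when_def)
  also have "\<dots> = Poly_Mapping.lookup p k"
    by (cases "k \<in> Poly_Mapping.keys p") (auto simp: sum.delta' in_keys_iff)
  finally show "Poly_Mapping.lookup p k = poly_mapping.lookup (\<Sum>m\<in>Poly_Mapping.keys p. Poly_Mapping.single m (Poly_Mapping.lookup p m)) k" by simp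
qed

lemma ev_mult: "ev x (p * q) = ev x p * ev x q"
proof -
  have "p * q = (\<Sum>m\<in>Poly_Mapping.keys p. \<Sum>m'\<in>Poly_Mapping.keys q. Poly_Mapping.single m (Poly_Mapping.lookup p m) * Poly_Mapping.single m' (Poly_Mapping.lookup q m'))"
    by (subst pm_decomp[of p], subst pm_decomp[of q]) (simp add: sum_distrib_left sum_distrib_right sum.swap[of _ "Poly_Mapping.keys q"])
  hence "ev x (p * q) = (\<Sum>m\<in>Poly_Mapping.keys p. \<Sum>m'\<in>Poly_Mapping.keys q. of_int (Poly_Mapping.lookup p m) * mon x m * (of_int (Poly_Mapping.lookup q m') * mon x m'))"
    by (simp add: ev_sum mult_single ev_single mon_add mult_ac)
  also have "\<dots> = ev x p * ev x q"
    by (simp add: ev_def sum_distrib_left sum_distrib_right sum.swap[of _ "Poly_Mapping.keys q"])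
  finally show ?thesis .
qed

lemma ev_one[simp]: "ev x 1 = 1"
proof -
  have "(1::zpoly) = Poly_Mapping.single 0 1" by simp
  thus ?thesis by (metis ev_single mon_zero mult_1 of_int_1)
qed

lemma ev_hom: "comm_ring_hom (ev x)"
  by unfold_locales (auto simp: ev_add ev_mult)

lemma ev_Var[simp]: "ev x (Var u) = x u"
  by (simp add: Var_def ev_single mon_def)

definition symg :: "nat set \<Rightarrow> (nat \<Rightarrow> nat \<Rightarrow> bool) \<Rightarrow> bool" where
  "symg V E \<longleftrightarrow> (\<forall>u\<in>V. \<forall>v\<in>V. E u v \<longrightarrow> E v u) \<and> (\<forall>u\<in>V. \<not> E u u)"

definition nb :: "nat set \<Rightarrow> (nat \<Rightarrow> nat \<Rightarrow> bool) \<Rightarrow> nat \<Rightarrow> nat set" where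
  "nb V E r = {s\<in>V. E r s}"

definition kern :: "nat set \<Rightarrow> (nat \<Rightarrow> nat \<Rightarrow> bool) \<Rightarrow> (nat \<Rightarrow> bit) \<Rightarrow> (nat \<Rightarrow> bit) \<Rightarrow> bool" where
  "kern V E x u \<longleftrightarrow> (\<forall>r\<in>V. x r * u r + (\<Sum>s\<in>V. if E r s then u s else 0) = 0)"

definition good :: "nat set \<Rightarrow> (nat \<Rightarrow> nat \<Rightarrow> bool) \<Rightarrow> bool" where
  "good V E \<longleftrightarrow> (\<exists>x u w. kern V E x u \<and> kern V E x w \<and> (\<exists>r\<in>V. u r \<noteq> 0) \<and> (\<exists>r\<in>V. w r \<noteq> 0)
      \<and> (\<exists>r\<in>V. u r \<noteq> w r))"

definition piso :: "nat set \<Rightarrow> (nat \<Rightarrow> nat \<Rightarrow> bool) \<Rightarrow> bool" where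
  "piso V E \<longleftrightarrow> (\<exists>f. bij_betw f V {0..<card V} \<and> (\<forall>a\<in>V. \<forall>b\<in>V. E a b \<longleftrightarrow> path_graph (f a) (f b)))"

definition lc :: "(nat \<Rightarrow> nat \<Rightarrow> bool) \<Rightarrow> nat \<Rightarrow> nat \<Rightarrow> nat \<Rightarrow> bool" where
  "lc E v a b \<longleftrightarrow> (E a b \<noteq> (E v a \<and> E v b \<and> a \<noteq> b))"

lemma bit_add_self[simp]: "(a::bit) + a = 0"
  by (cases a) simp_all

lemma bit_solve: "c = a + (b::bit) \<Longrightarrow> b = c + a"
  by (cases a; cases b; cases c; simp)

lemma bit_if_xor: "(if P \<noteq> Q then a else 0) = (if P then a else 0) + (if Q then a else (0::bit))"
  by auto

lemma symg_lc: "symg V E \<Longrightarrow> symg (V - {v}) (lc E v)"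
  unfolding symg_def lc_def by blast

lemma kern_lift:
  assumes fin: "finite V" and vV: "v \<in> V" and sg: "symg V E"
    and k: "kern (V - {v}) (lc E v) x' u'"
  defines "c \<equiv> (\<Sum>s\<in>V - {v}. if E v s then u' s else 0)"
  defines "X \<equiv> (\<lambda>r. if r = v then 1 else if E v r then x' r + 1 else x' r)"
  shows "kern V E X (\<lambda>r. if r = v then c else u' r)"
  unfolding kern_def
proof
  fix r assume rV: "r \<in> V"
  let ?U = "\<lambda>r. if r = v then c else u' r"
  let ?W = "V - {v}"
  have Evv: "\<not> E v v" using sg vV unfolding symg_def by auto
  have split: "(\<Sum>s\<in>V. if E r s then ?U s else 0) = (if E r v then c else 0) + (\<Sum>s\<in>?W. if E r s then u' s else 0)"
  proof -
    have "(\<Sum>s\<in>V. if E r s then ?U s else 0) = (if E r v then ?U v else 0) + (\<Sum>s\<in>?W. if E r s then ?U s else 0)"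
      using fin vV by (rule sum.remove)
    moreover have "(\<Sum>s\<in>?W. if E r s then ?U s else 0) = (\<Sum>s\<in>?W. if E r s then u' s else 0)"
      by (rule sum.cong) auto
    ultimately show ?thesis by simp
  qed
  show "X r * ?U r + (\<Sum>s\<in>V. if E r s then ?U s else 0) = 0"
  proof (cases "r = v")
    case True
    have "(\<Sum>s\<in>V. if E r s then ?U s else 0) = c"
      using split True Evv by (simp add: c_def)
    thus ?thesis using True by (simp add: X_def)
  next
    case False
    hence rW: "r \<in> ?W" using rV by auto
    have row: "x' r * u' r + (\<Sum>s\<in>?W. if lc E v r s then u' s else 0) = 0"
      using k rW unfolding kern_def by blast
    have t1: "(\<Sum>s\<in>?W. if lc E v r s then u' s else 0)
       = (\<Sum>s\<in>?W. if E r s then u' s else 0) + (\<Sum>s\<in>?W. if E v r \<and> E v s \<and> r \<noteq> s then u' s else 0)"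
      unfolding lc_def bit_if_xor sum.distrib ..
    have t2: "(\<Sum>s\<in>?W. if E v r \<and> E v s \<and> r \<noteq> s then u' s else 0) = (if E v r then c + u' r else 0)"
    proof (cases "E v r")
      case True
      have "(\<Sum>s\<in>?W. if E v r \<and> E v s \<and> r \<noteq> s then u' s else 0) = (\<Sum>s\<in>?W - {r}. if E v s then u' s else 0)"
      proof -
        have "(\<Sum>s\<in>?W. if E v r \<and> E v s \<and> r \<noteq> s then u' s else 0) = (if E v r \<and> E v r \<and> r \<noteq> r then u' r else 0) + (\<Sum>s\<in>?W - {r}. if E v r \<and> E v s \<and> r \<noteq> s then u' s else 0)"
          using fin rW by (intro sum.remove) auto
        moreover have "(\<Sum>s\<in>?W - {r}. if E v r \<and> E v s \<and> r \<noteq> s then u' s else 0) = (\<Sum>s\<in>?W - {r}. if E v s then u' s else 0)"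
          using True by (intro sum.cong) auto
        ultimately show ?thesis by simp
      qed
      moreover have "c = u' r + (\<Sum>s\<in>?W - {r}. if E v s then u' s else 0)"
        unfolding c_def using fin rW True by (simp add: sum.remove[of ?W r])
      ultimately show ?thesis using True bit_solve by simp
    qed simp
    have Erv: "E r v = E v r" using sg rV vV unfolding symg_def by blast
    show ?thesis
      using row split t1 t2 False Erv
      by (cases "E v r"; cases "x' r"; cases "u' r"; cases c; cases "(\<Sum>s\<in>?W. if E r s then u' s else 0)"; simp add: X_def)
  qed
qed

lemma good_lift:
  assumes fin: "finite V" and vV: "v \<in> V" and sg: "symg V E"
    and g: "good (V - {v}) (lc E v)"
  shows "good V E"
proof -
  from g obtain x u w where ku: "kern (V - {v}) (lc E v) x u" and kw: "kern (V - {v}) (lc E v) x w"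
    and nu: "\<exists>r\<in>V - {v}. u r \<noteq> 0" and nw: "\<exists>r\<in>V - {v}. w r \<noteq> 0" and nuw: "\<exists>r\<in>V - {v}. u r \<noteq> w r"
    unfolding good_def by blast
  let ?X = "\<lambda>r. if r = v then 1 else if E v r then x r + 1 else x r"
  let ?U = "\<lambda>r. if r = v then (\<Sum>s\<in>V - {v}. if E v s then u s else 0) else u r"
  let ?W = "\<lambda>r. if r = v then (\<Sum>s\<in>V - {v}. if E v s then w s else 0) else w r"
  have "kern V E ?X ?U" using kern_lift[OF fin vV sg ku] by simp
  moreover have "kern V E ?X ?W" using kern_lift[OF fin vV sg kw] by simp
  moreover have "\<exists>r\<in>V. ?U r \<noteq> 0" using nu by (metis DiffD1 DiffD2 insertI1)
  moreover have "\<exists>r\<in>V. ?W r \<noteq> 0" using nw by (metis DiffD1 DiffD2 insertI1)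
  moreover have "\<exists>r\<in>V. ?U r \<noteq> ?W r" using nuw by (metis DiffD1 DiffD2 insertI1)
  ultimately show ?thesis unfolding good_def by blast
qed

lemma good_isolated:
  assumes fin: "finite V" and zV: "z \<in> V" and yV: "y \<in> V" and yz: "y \<noteq> z" and sg: "symg V E"
    and iso: "\<forall>s\<in>V. \<not> E z s"
  shows "good V E"
proof -
  let ?x = "\<lambda>r. (\<Sum>s\<in>V. if E r s then 1 else 0) :: bit"
  let ?u = "\<lambda>r. if r = z then 1 else 0 :: bit"
  let ?w = "\<lambda>r. if r = z then 0 else 1 :: bit"
  have nz: "\<forall>r\<in>V. \<not> E r z" using iso sg zV unfolding symg_def by blast
  have "kern V E ?x ?u" unfolding kern_def
  proof
    fix r assume rV: "r \<in> V"
    show "?x r * ?u r + (\<Sum>s\<in>V. if E r s then ?u s else 0) = 0"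
    proof (cases "r = z")
      case True thus ?thesis using iso by simp
    next
      case False
      have "(\<Sum>s\<in>V. if E r s then ?u s else 0) = (\<Sum>s\<in>V. 0)"
        using nz rV by (intro sum.cong) auto
      thus ?thesis using False by simp
    qed
  qed
  moreover have "kern V E ?x ?w" unfolding kern_def
  proof
    fix r assume rV: "r \<in> V"
    show "?x r * ?w r + (\<Sum>s\<in>V. if E r s then ?w s else 0) = 0"
    proof (cases "r = z")
      case True thus ?thesis using iso by simp
    next
      case False
      have "(\<Sum>s\<in>V. if E r s then ?w s else 0) = ?x r"
        using nz rV by (intro sum.cong) auto
      thus ?thesis using False by simp
    qed
  qed
  moreover have "\<exists>r\<in>V. ?u r \<noteq> 0" using zV by force
  moreover have "\<exists>r\<in>V. ?w r \<noteq> 0" using yV yz by force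
  moreover have "\<exists>r\<in>V. ?u r \<noteq> ?w r" using zV by force
  ultimately show ?thesis unfolding good_def by blast
qed

lemma piso_cong:
  assumes "\<forall>a\<in>V. \<forall>b\<in>V. E a b = F a b"
  shows "piso V E = piso V F"
  using assms unfolding piso_def by auto

lemma piso_nb_card:
  assumes bij: "bij_betw f V {0..<card V}" and e: "\<forall>a\<in>V. \<forall>b\<in>V. E a b \<longleftrightarrow> path_graph (f a) (f b)"
    and rV: "r \<in> V"
  shows "card (nb V E r) = card {t\<in>{0..<card V}. path_graph (f r) t}"
proof -
  have "f ` nb V E r = {t\<in>{0..<card V}. path_graph (f r) t}"
  proof
    show "f ` nb V E r \<subseteq> {t\<in>{0..<card V}. path_graph (f r) t}"
      using bij e rV unfolding nb_def bij_betw_def by auto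
    show "{t\<in>{0..<card V}. path_graph (f r) t} \<subseteq> f ` nb V E r"
    proof
      fix t assume t: "t \<in> {t\<in>{0..<card V}. path_graph (f r) t}"
      then obtain s where "s \<in> V" "f s = t" using bij unfolding bij_betw_def by (metis (no_types, lifting) imageE mem_Collect_eq)
      thus "t \<in> f ` nb V E r" using t e rV unfolding nb_def by auto
    qed
  qed
  moreover have "inj_on f (nb V E r)" using bij unfolding bij_betw_def nb_def by (auto intro: inj_on_subset)
  ultimately show ?thesis by (metis card_image)
qed

lemma path_deg_le2: "card {t\<in>{0..<m}. path_graph k t} \<le> 2"
proof -
  have "{t\<in>{0..<m}. path_graph k t} \<subseteq> {k + 1, k - 1}" unfolding path_graph_def by auto
  hence "card {t\<in>{0..<m}. path_graph k t} \<le> card {k + 1, k - 1}" by (intro card_mono) auto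
  also have "\<dots> \<le> 2" by (simp add: card_insert_le_m1)
  finally show ?thesis .
qed

lemma piso_deg_le2: assumes "piso V E" "r \<in> V" shows "card (nb V E r) \<le> 2"
proof -
  obtain f where bij: "bij_betw f V {0..<card V}" and e: "\<forall>a\<in>V. \<forall>b\<in>V. E a b \<longleftrightarrow> path_graph (f a) (f b)"
    using assms(1) unfolding piso_def by blast
  show ?thesis using piso_nb_card[OF bij e assms(2)] path_deg_le2 by simp
qed

lemma piso_nb_ne: assumes "piso V E" "r \<in> V" "card V \<ge> 2" shows "nb V E r \<noteq> {}"
proof -
  obtain f where bij: "bij_betw f V {0..<card V}" and e: "\<forall>a\<in>V. \<forall>b\<in>V. E a b \<longleftrightarrow> path_graph (f a) (f b)"
    using assms(1) unfolding piso_def by blast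
  have fr: "f r < card V" using bij assms(2) unfolding bij_betw_def by auto
  have "{t\<in>{0..<card V}. path_graph (f r) t} \<noteq> {}"
  proof (cases "f r + 1 < card V")
    case True thus ?thesis unfolding path_graph_def by auto
  next
    case False
    hence "f r - 1 \<in> {t\<in>{0..<card V}. path_graph (f r) t}" using fr assms(3) unfolding path_graph_def by auto
    thus ?thesis by blast
  qed
  moreover have "finite V" using assms(3) card.infinite by fastforce
  ultimately have "card (nb V E r) \<noteq> 0" using piso_nb_card[OF bij e assms(2)] by simp
  thus ?thesis by auto
qed

lemma piso_has_leaf: assumes "piso V E" "V \<noteq> {}" "finite V" shows "\<exists>r\<in>V. card (nb V E r) \<le> 1"
proof -
  obtain f where bij: "bij_betw f V {0..<card V}" and e: "\<forall>a\<in>V. \<forall>b\<in>V. E a b \<longleftrightarrow> path_graph (f a) (f b)"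
    using assms(1) unfolding piso_def by blast
  have "0 \<in> {0..<card V}" using assms(2,3) by (simp add: card_gt_0_iff)
  then obtain r where rV: "r \<in> V" and fr: "f r = 0" using bij unfolding bij_betw_def by (metis imageE)
  have "{t\<in>{0..<card V}. path_graph 0 t} \<subseteq> {1}" unfolding path_graph_def by auto
  hence "card {t\<in>{0..<card V}. path_graph 0 t} \<le> 1" using card_mono[of "{1::nat}"] by fastforce
  hence "card (nb V E r) \<le> 1" using piso_nb_card[OF bij e rV] fr by simp
  thus ?thesis using rV by blast
qed

lemma piso_no_triangle:
  assumes "piso V E" "a \<in> V" "b \<in> V" "c \<in> V" "E a b" "E b c" "E a c"
  shows False
proof -
  obtain f where e: "\<forall>a\<in>V. \<forall>b\<in>V. E a b \<longleftrightarrow> path_graph (f a) (f b)"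
    using assms(1) unfolding piso_def by blast
  have "path_graph (f a) (f b)" "path_graph (f b) (f c)" "path_graph (f a) (f c)"
    using e assms by blast+
  thus False unfolding path_graph_def by presburger
qed

lemma nb_sub: "nb V E r \<subseteq> V" unfolding nb_def by auto

lemma nb_fin: "finite V \<Longrightarrow> finite (nb V E r)" unfolding nb_def by auto

lemma card_V_ge3:
  assumes fin: "finite V" and sg: "symg V E" and vV: "v \<in> V" and d: "card (nb V E v) \<ge> 2"
  shows "card V \<ge> 3"
proof -
  have "nb V E v \<subseteq> V - {v}" using sg vV unfolding nb_def symg_def by auto
  hence "card (nb V E v) \<le> card (V - {v})" using fin by (intro card_mono) auto
  thus ?thesis using d fin vV by (simp add: card_Diff_singleton)
qed

lemma case_far:
  assumes fin: "finite V" and sg: "symg V E" and wV: "w \<in> V" and vV: "v \<in> V" and vw: "v \<noteq> w"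
    and nE: "\<not> E v w" and d: "card (nb V E w) \<ge> 3"
  shows "\<not> piso (V - {v}) (lc E v)"
proof
  assume p: "piso (V - {v}) (lc E v)"
  have "nb (V - {v}) (lc E v) w = nb V E w"
    using sg wV vV nE unfolding nb_def lc_def symg_def by auto
  thus False using piso_deg_le2[OF p, of w] wV vw d by auto
qed

lemma case_two_univ:
  assumes fin: "finite V" and sg: "symg V E" and aV: "a \<in> V" and bV: "b \<in> V" and ab: "a \<noteq> b"
    and ua: "\<forall>s\<in>V. s \<noteq> a \<longrightarrow> E a s" and ub: "\<forall>s\<in>V. s \<noteq> b \<longrightarrow> E b s" and c3: "card V \<ge> 3"
  shows "\<not> piso (V - {a}) (lc E a)"
proof
  assume p: "piso (V - {a}) (lc E a)"
  have "nb (V - {a}) (lc E a) b = {}"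
    using sg aV bV ab ua ub unfolding nb_def lc_def symg_def by auto
  moreover have "card (V - {a}) \<ge> 2" using c3 fin aV by (simp add: card_Diff_singleton)
  ultimately show False using piso_nb_ne[OF p, of b] bV ab by auto
qed

lemma case_tri:
  assumes fin: "finite V" and sg: "symg V E" and vV: "v \<in> V"
    and nv: "nb V E v = {a, b}" and ab: "a \<noteq> b" and na: "nb V E a = {v, b}" and c3: "card V \<ge> 3"
  shows "\<not> piso (V - {v}) (lc E v)"
proof
  assume p: "piso (V - {v}) (lc E v)"
  have aV: "a \<in> V" and av: "a \<noteq> v" using nv nb_sub[of V E v] sg vV unfolding symg_def nb_def by (auto simp: set_eq_iff)
  have "nb (V - {v}) (lc E v) a = {}"
  proof -
    { fix s assume s: "s \<in> V - {v}" "E a s \<noteq> (E v a \<and> E v s \<and> a \<noteq> s)"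
      have Eas: "E a s \<longleftrightarrow> s = v \<or> s = b" using na s unfolding nb_def by (auto simp: set_eq_iff)
      have Evs: "E v s \<longleftrightarrow> s = a \<or> s = b" using nv s unfolding nb_def by (auto simp: set_eq_iff)
      have "E v a" using nv unfolding nb_def by (auto simp: set_eq_iff)
      hence False using s Eas Evs ab by auto }
    thus ?thesis unfolding nb_def lc_def by auto
  qed
  moreover have "card (V - {v}) \<ge> 2" using c3 fin vV by (simp add: card_Diff_singleton)
  ultimately show False using piso_nb_ne[OF p, of a] aV av by auto
qed

lemma nonadj_helper:
  assumes fin: "finite V" and sg: "symg V E" and vV: "v \<in> V"
    and nv: "nb V E v = {a, b}" and ab: "a \<noteq> b" and nE: "\<not> E a b" and da: "card (nb V E a) \<ge> 2"
  shows "card (nb (V - {v}) (lc E v) a) \<ge> 2"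
proof -
  have aV: "a \<in> V" and bV: "b \<in> V" and Eva: "E v a" and Evb: "E v b"
    using nv unfolding nb_def by (auto simp: set_eq_iff)
  have Eav: "E a v" using sg aV vV Eva unfolding symg_def by blast
  have "\<exists>c. c \<in> nb V E a \<and> c \<noteq> v"
  proof (rule ccontr)
    assume "\<not> ?thesis"
    hence "nb V E a \<subseteq> {v}" by auto
    hence "card (nb V E a) \<le> 1" using card_mono[of "{v}"] by fastforce
    thus False using da by simp
  qed
  then obtain c where c: "c \<in> nb V E a" "c \<noteq> v" by blast
  have cV: "c \<in> V" and Eac: "E a c" using c unfolding nb_def by auto
  have cb: "c \<noteq> b" using nE Eac by auto
  have ca: "c \<noteq> a" using sg aV Eac unfolding symg_def by auto
  have nEvc: "\<not> E v c" using nv cV ca cb unfolding nb_def by (auto simp: set_eq_iff)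
  have "{b, c} \<subseteq> nb (V - {v}) (lc E v) a"
    using bV cV c(2) cb ab nE Eac nEvc Eva Evb sg vV unfolding nb_def lc_def symg_def by auto
  moreover have "card {b, c} = 2" using cb by simp
  ultimately show ?thesis using card_mono[OF nb_fin[OF finite_Diff[OF fin]]] by metis
qed

lemma case_nonadj:
  assumes fin: "finite V" and sg: "symg V E" and vV: "v \<in> V"
    and nv: "nb V E v = {a, b}" and ab: "a \<noteq> b" and nE: "\<not> E a b"
    and md: "\<forall>r\<in>V. card (nb V E r) \<ge> 2"
  shows "\<not> piso (V - {v}) (lc E v)"
proof
  assume p: "piso (V - {v}) (lc E v)"
  have aV: "a \<in> V" and bV: "b \<in> V" and Eva: "E v a" and Evb: "E v b"
    using nv unfolding nb_def by (auto simp: set_eq_iff)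
  have av: "a \<noteq> v" using sg vV Eva unfolding symg_def by auto
  have nEba: "\<not> E b a" using sg aV bV nE unfolding symg_def by blast
  have all2: "\<forall>r\<in>V - {v}. card (nb (V - {v}) (lc E v) r) \<ge> 2"
  proof
    fix r assume r: "r \<in> V - {v}"
    show "card (nb (V - {v}) (lc E v) r) \<ge> 2"
    proof (cases "r = a \<or> r = b")
      case True
      thus ?thesis
      proof
        assume "r = a" thus ?thesis using nonadj_helper[OF fin sg vV nv ab nE] md aV by simp
      next
        assume "r = b" thus ?thesis using nonadj_helper[OF fin sg vV _ ab[symmetric] nEba] nv md bV
          by (simp add: insert_commute)
      qed
    next
      case False
      have nEvr: "\<not> E v r" using nv r False unfolding nb_def by (auto simp: set_eq_iff)
      have nErv: "\<not> E r v" using sg r vV nEvr unfolding symg_def by blast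
      have "nb (V - {v}) (lc E v) r = nb V E r"
        using nEvr nErv unfolding nb_def lc_def by auto
      thus ?thesis using md r by simp
    qed
  qed
  have "V - {v} \<noteq> {}" using aV av by auto
  then obtain r where r: "r \<in> V - {v}" "card (nb (V - {v}) (lc E v) r) \<le> 1"
    using piso_has_leaf[OF p] fin by blast
  have "card (nb (V - {v}) (lc E v) r) \<ge> 2" using all2 r(1) by blast
  thus False using r(2) by linarith
qed

lemma deg3:
  assumes fin: "finite V" and pq: "{p, q} \<subseteq> nb V E a" "p \<noteq> q" and ne: "nb V E a \<noteq> {p, q}"
  shows "card (nb V E a) \<ge> 3"
proof -
  obtain c where c: "c \<in> nb V E a" "c \<notin> {p, q}" using pq ne by blast
  have "{p, q, c} \<subseteq> nb V E a" using pq c by auto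
  moreover have "card {p, q, c} = 3" using c pq by auto
  ultimately show ?thesis using card_mono[OF nb_fin[OF fin]] by metis
qed

lemma mindeg:
  assumes fin: "finite V" and sg: "symg V E" and ne: "V \<noteq> {}"
    and md: "\<forall>r\<in>V. card (nb V E r) \<ge> 2"
  shows "\<exists>v\<in>V. \<not> piso (V - {v}) (lc E v)"
proof (rule ccontr)
  assume H: "\<not> ?thesis"
  obtain v0 where v0: "v0 \<in> V" using ne by blast
  have c3: "card V \<ge> 3" using card_V_ge3[OF fin sg v0] md v0 by blast
  have F1: "\<forall>s\<in>V. s \<noteq> w \<longrightarrow> E w s" if wV: "w \<in> V" and d: "card (nb V E w) \<ge> 3" for w
  proof (intro ballI impI, rule ccontr)
    fix s assume s: "s \<in> V" "s \<noteq> w" "\<not> E w s"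
    have "\<not> E s w" using sg s wV unfolding symg_def by blast
    thus False using case_far[OF fin sg wV s(1) s(2) _ d] H s(1) by blast
  qed
  have F2: False if a: "a \<in> V" "b \<in> V" "a \<noteq> b" "\<forall>s\<in>V. s \<noteq> a \<longrightarrow> E a s" "\<forall>s\<in>V. s \<noteq> b \<longrightarrow> E b s" for a b
    using case_two_univ[OF fin sg a c3] H a(1) by blast
  show False
  proof (cases "\<exists>v\<in>V. card (nb V E v) = 2")
    case True
    then obtain v a b where vV: "v \<in> V" and nv: "nb V E v = {a, b}" and ab: "a \<noteq> b"
      by (auto simp: card_2_iff)
    have aV: "a \<in> V" and bV: "b \<in> V" and Eva: "E v a" and Evb: "E v b"
      using nv unfolding nb_def by (auto simp: set_eq_iff)
    have Eav: "E a v" and Ebv: "E b v" using sg vV aV bV Eva Evb unfolding symg_def by blast+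
    have av: "a \<noteq> v" and bv: "b \<noteq> v" using sg vV Eva Evb unfolding symg_def by auto
    show False
    proof (cases "E a b")
      case False
      thus False using case_nonadj[OF fin sg vV nv ab False md] H vV by blast
    next
      case True
      have Eba: "E b a" using sg aV bV True unfolding symg_def by blast
      show False
      proof (cases "nb V E a = {v, b}")
        case True2: True
        thus False using case_tri[OF fin sg vV nv ab True2 c3] H vV by blast
      next
        case False
        show False
        proof (cases "nb V E b = {v, a}")
          case True3: True
          have nv': "nb V E v = {b, a}" using nv by (simp add: insert_commute)
          thus False using case_tri[OF fin sg vV nv' ab[symmetric] True3 c3] H vV by blast
        next
          case False2: False
          have da: "card (nb V E a) \<ge> 3"
            using deg3[OF fin _ bv[symmetric] False] Eav True aV vV bV unfolding nb_def by auto
          have db: "card (nb V E b) \<ge> 3"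
            using deg3[OF fin _ av[symmetric] False2] Ebv Eba aV vV bV unfolding nb_def by auto
          show False using F2[OF aV bV ab F1[OF aV da] F1[OF bV db]] .
        qed
      qed
    qed
  next
    case False
    hence all3: "\<forall>r\<in>V. card (nb V E r) \<ge> 3" using md by fastforce
    have "nb V E v0 \<noteq> {}" using md v0 by fastforce
    then obtain a where a: "a \<in> nb V E v0" by blast
    have aV: "a \<in> V" and av: "a \<noteq> v0" using a sg v0 unfolding nb_def symg_def by auto
    show False using F2[OF v0 aV av[symmetric] F1[OF v0] F1[OF aV]] all3 v0 aV by blast
  qed
qed

lemma piso_reverse:
  assumes bij: "bij_betw f W {0..<m}" and e: "\<forall>a\<in>W. \<forall>b\<in>W. E a b \<longleftrightarrow> path_graph (f a) (f b)"
  shows "bij_betw (\<lambda>r. m - 1 - f r) W {0..<m} \<and> (\<forall>a\<in>W. \<forall>b\<in>W. E a b \<longleftrightarrow> path_graph (m - 1 - f a) (m - 1 - f b))"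
proof
  have h: "bij_betw (\<lambda>i. m - 1 - i) {0..<m} {0..<m}"
    unfolding bij_betw_def
  proof
    show "inj_on (\<lambda>i. m - 1 - i) {0..<m}" unfolding inj_on_def by auto
    show "(\<lambda>i. m - 1 - i) ` {0..<m} = {0..<m}"
    proof
      show "(\<lambda>i. m - 1 - i) ` {0..<m} \<subseteq> {0..<m}" by auto
      show "{0..<m} \<subseteq> (\<lambda>i. m - 1 - i) ` {0..<m}"
      proof
        fix j assume j: "j \<in> {0..<m}"
        hence "j = m - 1 - (m - 1 - j)" "m - 1 - j \<in> {0..<m}" by auto
        thus "j \<in> (\<lambda>i. m - 1 - i) ` {0..<m}" by blast
      qed
    qed
  qed
  show "bij_betw (\<lambda>r. m - 1 - f r) W {0..<m}"
    using bij_betw_trans[OF bij h] by (simp add: comp_def)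
  show "\<forall>a\<in>W. \<forall>b\<in>W. E a b \<longleftrightarrow> path_graph (m - 1 - f a) (m - 1 - f b)"
  proof (intro ballI)
    fix a b assume a: "a \<in> W" and b: "b \<in> W"
    have "f a < m" "f b < m" using bij a b unfolding bij_betw_def by auto
    hence "path_graph (m - 1 - f a) (m - 1 - f b) = path_graph (f a) (f b)"
      unfolding path_graph_def by auto
    thus "E a b \<longleftrightarrow> path_graph (m - 1 - f a) (m - 1 - f b)" using e a b by simp
  qed
qed

lemma piso_extend_end:
  assumes fin: "finite V" and lV: "l \<in> V" and sg: "symg V E" and nl: "\<forall>s\<in>V. E l s \<longleftrightarrow> s = w"
    and bij: "bij_betw f (V - {l}) {0..<m}" and e: "\<forall>a\<in>V - {l}. \<forall>b\<in>V - {l}. E a b \<longleftrightarrow> path_graph (f a) (f b)"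
    and wV: "w \<in> V - {l}" and fw: "f w = m - 1"
  shows "piso V E"
proof -
  have cm: "card (V - {l}) = m" using bij bij_betw_same_card by fastforce
  have cV: "card V = Suc m" using cm fin lV by (metis card_Suc_Diff1)
  have m1: "m \<ge> 1" using wV bij unfolding bij_betw_def by fastforce
  let ?g = "\<lambda>r. if r = l then m else f r"
  have fr: "\<And>r. r \<in> V - {l} \<Longrightarrow> f r < m" using bij unfolding bij_betw_def by auto
  have injf: "inj_on f (V - {l})" using bij unfolding bij_betw_def by auto
  have "bij_betw ?g V {0..<Suc m}"
    unfolding bij_betw_def
  proof
    show "inj_on ?g V"
      unfolding inj_on_def
    proof (intro ballI impI)
      fix a b assume a: "a \<in> V" and b: "b \<in> V" and eq: "?g a = ?g b"
      show "a = b"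
      proof (cases "a = l"; cases "b = l")
        assume "a \<noteq> l" "b \<noteq> l"
        thus "a = b" using injf a b eq unfolding inj_on_def by auto
      qed (use a b eq fr in fastforce)+
    qed
    show "?g ` V = {0..<Suc m}"
    proof
      show "?g ` V \<subseteq> {0..<Suc m}" using fr by fastforce
      show "{0..<Suc m} \<subseteq> ?g ` V"
      proof
        fix t assume t: "t \<in> {0..<Suc m}"
        show "t \<in> ?g ` V"
        proof (cases "t = m")
          case True thus ?thesis using lV by force
        next
          case False
          hence "t \<in> {0..<m}" using t by auto
          then obtain r where r: "r \<in> V - {l}" "f r = t" using bij unfolding bij_betw_def by (metis imageE)
          thus ?thesis by force
        qed
      qed
    qed
  qed
  moreover have "\<forall>a\<in>V. \<forall>b\<in>V. E a b \<longleftrightarrow> path_graph (?g a) (?g b)"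
  proof (intro ballI)
    fix a b assume a: "a \<in> V" and b: "b \<in> V"
    have key: "E l r \<longleftrightarrow> path_graph m (f r)" if r: "r \<in> V - {l}" for r
    proof -
      have "path_graph m (f r) \<longleftrightarrow> f r = m - 1" using fr[OF r] m1 unfolding path_graph_def by auto
      also have "\<dots> \<longleftrightarrow> r = w" using injf r wV fw unfolding inj_on_def by auto
      finally show ?thesis using nl r by auto
    qed
    have Ell: "\<not> E l l" using sg lV unfolding symg_def by auto
    show "E a b \<longleftrightarrow> path_graph (?g a) (?g b)"
    proof (cases "a = l"; cases "b = l")
      assume "a = l" "b = l" thus ?thesis using Ell unfolding path_graph_def by auto
    next
      assume "a = l" "b \<noteq> l" thus ?thesis using key[of b] b by auto
    next
      assume "a \<noteq> l" "b = l"
      moreover have "E a l = E l a" using sg a lV unfolding symg_def by blast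
      moreover have "path_graph (f a) m = path_graph m (f a)" unfolding path_graph_def by auto
      ultimately show ?thesis using key[of a] a by auto
    next
      assume "a \<noteq> l" "b \<noteq> l" thus ?thesis using e a b by auto
    qed
  qed
  ultimately show ?thesis unfolding piso_def cV by blast
qed

lemma core: "finite V \<Longrightarrow> symg V E \<Longrightarrow> \<not> good V E \<Longrightarrow> piso V E"
proof (induction "card V" arbitrary: V E rule: less_induct)
  case less
  note fin = less.prems(1) and sg = less.prems(2) and ng = less.prems(3)
  have sub: "piso (V - {v}) (lc E v)" if vV: "v \<in> V" for v
  proof -
    have "card (V - {v}) < card V" using fin vV by (meson card_Diff1_less)
    moreover have "\<not> good (V - {v}) (lc E v)" using good_lift[OF fin vV sg] ng by blast
    ultimately show ?thesis using less.hyps[of "V - {v}" "lc E v"] fin symg_lc[OF sg] by blast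
  qed
  show ?case
  proof (cases "card V \<le> 1")
    case True
    show ?thesis
    proof (cases "V = {}")
      case True
      thus ?thesis unfolding piso_def by (auto intro: exI[of _ id])
    next
      case False
      then obtain a where "V = {a}" using True fin by (metis card_0_eq card_1_singleton_iff le_Suc_eq One_nat_def le_zero_eq)
      moreover have "\<not> E a a" using sg calculation unfolding symg_def by auto
      ultimately show ?thesis unfolding piso_def path_graph_def
        by (intro exI[of _ "\<lambda>_. 0"]) (auto simp: bij_betw_def)
    qed
  next
    case False
    hence c2: "card V \<ge> 2" by simp
    have noiso: "nb V E z \<noteq> {}" if zV: "z \<in> V" for z
    proof
      assume iso: "nb V E z = {}"
      have "V - {z} \<noteq> {}" using c2 fin zV by (metis Diff_empty Diff_insert0 card.remove card_1_singleton_iff insert_Diff le_zero_eq not_less_eq_eq numeral_2_eq_2 One_nat_def)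
      then obtain y where "y \<in> V" "y \<noteq> z" by blast
      moreover have "\<forall>s\<in>V. \<not> E z s" using iso unfolding nb_def by auto
      ultimately have "good V E" using good_isolated[OF fin zV _ _ sg] by blast
      thus False using ng by blast
    qed
    show ?thesis
    proof (cases "\<forall>r\<in>V. card (nb V E r) \<ge> 2")
      case True
      have "V \<noteq> {}" using c2 by auto
      then obtain v where "v \<in> V" "\<not> piso (V - {v}) (lc E v)" using mindeg[OF fin sg _ True] by blast
      thus ?thesis using sub by blast
    next
      case False
      then obtain l where lV: "l \<in> V" and d: "card (nb V E l) < 2" by auto
      have "card (nb V E l) \<noteq> 0" using noiso[OF lV] nb_fin[OF fin] by auto
      hence "card (nb V E l) = Suc 0" using d by linarith
      then obtain w where nl: "nb V E l = {w}" by (auto simp: card_1_singleton_iff)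
      have nl': "\<forall>s\<in>V. E l s \<longleftrightarrow> s = w" using nl unfolding nb_def by (auto simp: set_eq_iff)
      have wV: "w \<in> V" and Elw: "E l w" using nl unfolding nb_def by auto
      have wl: "w \<noteq> l" using sg lV Elw unfolding symg_def by auto
      have Ewl: "E w l" using sg lV wV Elw unfolding symg_def by blast
      have "\<forall>a\<in>V - {l}. \<forall>b\<in>V - {l}. lc E l a b = E a b" using nl' unfolding lc_def by auto
      hence "piso (V - {l}) E" using sub[OF lV] piso_cong by blast
      moreover have cm: "card (V - {l}) = card V - 1" using fin lV by simp
      ultimately obtain f where bij: "bij_betw f (V - {l}) {0..<card V - 1}"
        and e: "\<forall>a\<in>V - {l}. \<forall>b\<in>V - {l}. E a b \<longleftrightarrow> path_graph (f a) (f b)"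
        unfolding piso_def by auto
      let ?m = "card V - 1"
      have wW: "w \<in> V - {l}" using wV wl by auto
      have fw: "f w < ?m" using bij wW unfolding bij_betw_def by auto
      show ?thesis
      proof (cases "f w = ?m - 1")
        case True
        thus ?thesis using piso_extend_end[OF fin lV sg nl' bij e wW] by blast
      next
        case False1: False
        show ?thesis
        proof (cases "f w = 0")
          case True
          have rv: "bij_betw (\<lambda>r. ?m - 1 - f r) (V - {l}) {0..<?m} \<and>
            (\<forall>a\<in>V - {l}. \<forall>b\<in>V - {l}. E a b \<longleftrightarrow> path_graph (?m - 1 - f a) (?m - 1 - f b))"
            by (rule piso_reverse[OF bij e])
          show ?thesis using piso_extend_end[OF fin lV sg nl' conjunct1[OF rv] conjunct2[OF rv] wW] True by simp
        next
          case False
          define k where "k = f w"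
          have k: "0 < k" "k + 1 < ?m" using False False1 fw unfolding k_def by auto
          have "k - 1 \<in> {0..<?m}" "k + 1 \<in> {0..<?m}" using k by auto
          then obtain p q where p: "p \<in> V - {l}" "f p = k - 1" and q: "q \<in> V - {l}" "f q = k + 1"
            using bij unfolding bij_betw_def by (metis imageE)
          have Ewp: "E w p" using e wW p k unfolding path_graph_def k_def by auto
          have Ewq: "E w q" using e wW q k unfolding path_graph_def k_def by auto
          have nEpq: "\<not> E p q" using e p q k unfolding path_graph_def by auto
          have pw: "p \<noteq> w" and qw: "q \<noteq> w" using p q k unfolding k_def by auto
          have pq: "p \<noteq> q" using p q k by auto
          have nElp: "\<not> E l p" and nElq: "\<not> E l q" using nl' p q pw qw by auto
          have "lc E w l p" "lc E w p q" "lc E w l q"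
            using Ewl Ewp Ewq nEpq nElp nElq p q pq unfolding lc_def by auto
          moreover have "l \<in> V - {w}" "p \<in> V - {w}" "q \<in> V - {w}" using lV wl p q pw qw by auto
          ultimately show ?thesis using piso_no_triangle[OF sub[OF wV]] by blast
        qed
      qed
    qed
  qed
qed

lemma ev_uminus: "ev x (- p) = - ev x p"
proof -
  have "ev x (- p) + ev x p = 0" by (metis ev_add ev_zero add.left_inverse)
  thus ?thesis by (simp add: eq_neg_iff_add_eq_0)
qed

lemma pick_bij: "finite J \<Longrightarrow> bij_betw (pick J) {0..<card J} J"
  unfolding bij_betw_def
proof
  assume fin: "finite J"
  show "inj_on (pick J) {0..<card J}"
    unfolding inj_on_def
  proof (intro ballI impI, rule ccontr)
    fix i j assume i: "i \<in> {0..<card J}" and j: "j \<in> {0..<card J}" and eq: "pick J i = pick J j" and ne: "i \<noteq> j"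
    show False
    proof (cases "i < j")
      case True thus False using pick_mono[of j J i] j eq by auto
    next
      case False hence "j < i" using ne by auto
      thus False using pick_mono[of i J j] i eq by auto
    qed
  qed
  show "pick J ` {0..<card J} = J"
  proof
    show "pick J ` {0..<card J} \<subseteq> J" using pick_in_set by auto
    show "J \<subseteq> pick J ` {0..<card J}"
    proof
      fix s assume s: "s \<in> J"
      have "{a\<in>J. a < s} \<subset> J" using s by auto
      hence "card {a\<in>J. a < s} < card J" using fin by (rule psubset_card_mono[rotated])
      hence "card {a\<in>J. a < s} \<in> {0..<card J}" by simp
      moreover have "s = pick J (card {a\<in>J. a < s})" using pick_card_in_set[OF s] by simp
      ultimately show "s \<in> pick J ` {0..<card J}" by blast
    qed
  qed
qed

lemma card_sub_le: "I \<subseteq> {0..<n} \<Longrightarrow> card {i. i < n \<and> i \<in> I} = card I"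
proof -
  assume "I \<subseteq> {0..<n}"
  hence "{i. i < n \<and> i \<in> I} = I" by auto
  thus ?thesis by simp
qed

lemma det_vanish:
  fixes A :: "bit mat"
  assumes A: "A \<in> carrier_mat n n"
    and kz: "\<forall>r<n. (\<Sum>s<n. A $$ (r, s) * z s) = 0"
    and I: "I \<subseteq> {0..<n}" and J: "J \<subseteq> {0..<n}" and cIJ: "card I = card J"
    and zout: "\<forall>s<n. s \<notin> J \<longrightarrow> z s = 0" and znz: "\<exists>s\<in>J. z s \<noteq> 0"
  shows "det (submatrix A I J) = 0"
proof -
  let ?k = "card J"
  let ?M = "submatrix A I J"
  have finJ: "finite J" using J finite_subset by blast
  have dr: "dim_row ?M = ?k" using A I cIJ by (simp add: dim_submatrix card_sub_le)
  have dc: "dim_col ?M = ?k" using A J by (simp add: dim_submatrix card_sub_le)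
  have M: "?M \<in> carrier_mat ?k ?k" using dr dc by auto
  let ?v = "vec ?k (\<lambda>j. z (pick J j))"
  have "?v \<noteq> 0\<^sub>v ?k"
  proof
    assume v0: "?v = 0\<^sub>v ?k"
    obtain s where s: "s \<in> J" "z s \<noteq> 0" using znz by blast
    then obtain j where j: "j < ?k" "pick J j = s" using pick_bij[OF finJ] unfolding bij_betw_def
      by (metis atLeastLessThan_iff imageE)
    have "?v $ j = 0" using v0 j by simp
    thus False using j s by simp
  qed
  moreover have "?M *\<^sub>v ?v = 0\<^sub>v ?k"
  proof (rule eq_vecI)
    show "dim_vec (?M *\<^sub>v ?v) = dim_vec (0\<^sub>v ?k)" using dr by simp
    fix i assume "i < dim_vec (0\<^sub>v ?k)"
    hence i: "i < ?k" by simp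
    have piI: "pick I i \<in> I" using pick_in_set[of i I] i cIJ by auto
    hence pn: "pick I i < n" using I by auto
    have "(?M *\<^sub>v ?v) $ i = row ?M i \<bullet> ?v" using i dr by (metis index_mult_mat_vec)
    also have "\<dots> = (\<Sum>j\<in>{0..<?k}. row ?M i $ j * ?v $ j)" unfolding scalar_prod_def by simp
    also have "\<dots> = (\<Sum>j<?k. ?M $$ (i, j) * z (pick J j))"
      unfolding atLeast0LessThan using i dr dc by (intro sum.cong) auto
    also have "\<dots> = (\<Sum>j<?k. A $$ (pick I i, pick J j) * z (pick J j))"
      using i dr dc by (intro sum.cong) (auto simp: submatrix_def)
    also have "\<dots> = (\<Sum>s\<in>J. A $$ (pick I i, s) * z s)"
      using sum.reindex_bij_betw[OF pick_bij[OF finJ], of "\<lambda>s. A $$ (pick I i, s) * z s"]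
      by (simp add: atLeast0LessThan)
    also have "\<dots> = (\<Sum>s<n. A $$ (pick I i, s) * z s)"
      using J zout by (intro sum.mono_neutral_left) auto
    also have "\<dots> = 0" using kz pn by blast
    finally show "(?M *\<^sub>v ?v) $ i = 0\<^sub>v ?k $ i" using i by simp
  qed
  moreover have "?v \<in> carrier_vec ?k" by simp
  ultimately show ?thesis using det_0_iff_vec_prod_zero_field[OF M] by blast
qed

lemma path_minor:
  assumes sg: "symg {0..<n} E" and iso: "graph_iso n E path_graph" and n: "n \<ge> 1"
  shows "critical_ideal n E (n - 1) = UNIV"
proof -
  obtain f where fb: "bij_betw f {0..<n} {0..<n}" and e: "\<forall>u<n. \<forall>v<n. E u v \<longleftrightarrow> path_graph (f u) (f v)"
    using iso unfolding graph_iso_def by auto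
  define m where "m = n - 1"
  have finj: "inj_on f {0..<n}" and fim: "f ` {0..<n} = {0..<n}" using fb unfolding bij_betw_def by auto
  have "0 \<in> f ` {0..<n}" using fim n by simp
  then obtain a where a: "a < n" "f a = 0" by auto
  have "m \<in> f ` {0..<n}" using fim n unfolding m_def by simp
  then obtain b where b: "b < n" "f b = m" by auto
  define I where "I = {0..<n} - {a}"
  define J where "J = {0..<n} - {b}"
  have cI: "card I = m" unfolding I_def m_def using a by simp
  have cJ: "card J = m" unfolding J_def m_def using b by simp
  have finI: "finite I" and finJ: "finite J" unfolding I_def J_def by auto
  have IS: "I \<subseteq> {0..<n}" and JS: "J \<subseteq> {0..<n}" unfolding I_def J_def by auto
  let ?L = "gen_laplacian n E"
  let ?M = "submatrix ?L I J"
  have dr: "dim_row ?M = m" using IS cI by (simp add: dim_submatrix card_sub_le gen_laplacian_def)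
  have dc: "dim_col ?M = m" using JS cJ by (simp add: dim_submatrix card_sub_le gen_laplacian_def)
  have pI: "pick I i \<in> I" if "i < m" for i using pick_in_set[of i I] that cI by auto
  have pJ: "pick J j \<in> J" if "j < m" for j using pick_in_set[of j J] that cJ by auto
  have Ment: "?M $$ (i, j) = ?L $$ (pick I i, pick J j)" if "i < m" "j < m" for i j
    using that dr dc by (simp add: submatrix_def)
  define rr where "rr i = f (pick I i) - 1" for i
  define cc where "cc j = f (pick J j)" for j
  have fpI: "f (pick I i) \<ge> 1 \<and> f (pick I i) < n" if "i < m" for i
  proof -
    have "pick I i < n" "pick I i \<noteq> a" using pI[OF that] unfolding I_def by auto
    moreover hence "f (pick I i) \<noteq> f a" using a by (intro inj_on_contraD[OF finj]) auto
    ultimately show ?thesis using a fb unfolding bij_betw_def by fastforce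
  qed
  have fpJ: "f (pick J j) < m" if "j < m" for j
  proof -
    have "pick J j < n" "pick J j \<noteq> b" using pJ[OF that] unfolding J_def by auto
    moreover hence "f (pick J j) \<noteq> f b" using b by (intro inj_on_contraD[OF finj]) auto
    moreover have "f (pick J j) < n" using calculation(1) fb unfolding bij_betw_def by fastforce
    ultimately show ?thesis using b unfolding m_def by auto
  qed
  have pIinj: "inj_on (pick I) {0..<m}" using pick_bij[OF finI] cI unfolding bij_betw_def by simp
  have pJinj: "inj_on (pick J) {0..<m}" using pick_bij[OF finJ] cJ unfolding bij_betw_def by simp
  have rinj: "inj_on rr {0..<m}"
  proof (rule inj_onI)
    fix i i' assume i: "i \<in> {0..<m}" and i': "i' \<in> {0..<m}" and eq: "rr i = rr i'"
    have "f (pick I i) \<ge> 1" "f (pick I i') \<ge> 1" using fpI i i' by auto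
    hence "f (pick I i) = f (pick I i')" using eq unfolding rr_def by linarith
    moreover have "pick I i \<in> {0..<n}" "pick I i' \<in> {0..<n}" using pI[of i] pI[of i'] i i' IS by auto
    ultimately have "pick I i = pick I i'" using finj by (meson inj_onD)
    thus "i = i'" using pIinj i i' by (meson inj_onD)
  qed
  have cinj: "inj_on cc {0..<m}"
  proof (rule inj_onI)
    fix i i' assume i: "i \<in> {0..<m}" and i': "i' \<in> {0..<m}" and eq: "cc i = cc i'"
    have "pick J i \<in> {0..<n}" "pick J i' \<in> {0..<n}" using pJ[of i] pJ[of i'] i i' JS by auto
    hence "pick J i = pick J i'" using finj eq unfolding cc_def by (meson inj_onD)
    thus "i = i'" using pJinj i i' by (meson inj_onD)
  qed
  have rbij: "bij_betw rr {0..<m} {0..<m}"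
    unfolding bij_betw_def using rinj endo_inj_surj[of "{0..<m}" rr] fpI unfolding rr_def m_def by fastforce
  have cbij: "bij_betw cc {0..<m} {0..<m}"
    unfolding bij_betw_def using cinj endo_inj_surj[of "{0..<m}" cc] fpJ unfolding cc_def by fastforce
  have ENT: "rr i \<le> cc j" if ij: "i < m" "j < m" and nz: "?M $$ (i, j) \<noteq> 0" for i j
  proof -
    let ?u = "pick I i" and ?v = "pick J j"
    have un: "?u < n" and vn: "?v < n" using pI[OF ij(1)] pJ[OF ij(2)] IS JS by auto
    have "?L $$ (?u, ?v) \<noteq> 0" using nz Ment ij by simp
    hence "?u = ?v \<or> E ?u ?v" using un vn by (auto simp: gen_laplacian_def split: if_splits)
    hence "f ?u = f ?v \<or> path_graph (f ?u) (f ?v)" using e un vn by auto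
    thus ?thesis unfolding rr_def cc_def path_graph_def by auto
  qed
  have EQ: "?M $$ (i, j) = -1" if ij: "i < m" "j < m" and eq: "rr i = cc j" for i j
  proof -
    let ?u = "pick I i" and ?v = "pick J j"
    have un: "?u < n" and vn: "?v < n" using pI[OF ij(1)] pJ[OF ij(2)] IS JS by auto
    have "f ?u = f ?v + 1" using eq fpI[OF ij(1)] unfolding rr_def cc_def by auto
    hence "E ?u ?v" "?u \<noteq> ?v" using e un vn unfolding path_graph_def by auto
    thus ?thesis using Ment ij un vn by (simp add: gen_laplacian_def)
  qed
  define p0 where "p0 i = (if i < m then the_inv_into {0..<m} cc (rr i) else i)" for i
  have cinv: "bij_betw (the_inv_into {0..<m} cc) {0..<m} {0..<m}" by (rule bij_betw_the_inv_into[OF cbij])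
  have p0bij: "bij_betw p0 {0..<m} {0..<m}"
  proof -
    have "bij_betw (the_inv_into {0..<m} cc \<circ> rr) {0..<m} {0..<m}" by (rule bij_betw_trans[OF rbij cinv])
    moreover have "\<And>i. i \<in> {0..<m} \<Longrightarrow> (the_inv_into {0..<m} cc \<circ> rr) i = p0 i" unfolding p0_def by simp
    ultimately show ?thesis using bij_betw_cong by blast
  qed
  have p0perm: "p0 permutes {0..<m}"
    by (rule bij_imp_permutes[OF p0bij]) (simp add: p0_def)
  have P0c: "cc (p0 i) = rr i" "p0 i < m" if "i < m" for i
  proof -
    have "rr i \<in> {0..<m}" using rbij that unfolding bij_betw_def by auto
    thus "cc (p0 i) = rr i" using f_the_inv_into_f_bij_betw[OF cbij] that unfolding p0_def by simp
    show "p0 i < m" using p0bij that unfolding bij_betw_def by auto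
  qed
  have UNIQ: "p = p0" if pp: "p permutes {0..<m}" and nz: "\<forall>i<m. ?M $$ (i, p i) \<noteq> 0" for p
  proof -
    have pb: "bij_betw p {0..<m} {0..<m}" using pp unfolding permutes_altdef by simp
    have pim: "p i < m" if "i < m" for i using pb that unfolding bij_betw_def by auto
    have le: "\<forall>i\<in>{0..<m}. rr i \<le> cc (p i)" using ENT nz pim by auto
    have s1: "(\<Sum>i\<in>{0..<m}. cc (p i)) = (\<Sum>t\<in>{0..<m}. t)"
      using sum.reindex_bij_betw[OF bij_betw_trans[OF pb cbij], of "\<lambda>t. t"] by simp
    have s2: "(\<Sum>i\<in>{0..<m}. rr i) = (\<Sum>t\<in>{0..<m}. t)"
      using sum.reindex_bij_betw[OF rbij, of "\<lambda>t. t"] by simp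
    have eqs: "\<forall>i\<in>{0..<m}. rr i = cc (p i)"
    proof (rule ccontr)
      assume "\<not> ?thesis"
      then obtain i where "i \<in> {0..<m}" "rr i < cc (p i)" using le by force
      hence "(\<Sum>i\<in>{0..<m}. rr i) < (\<Sum>i\<in>{0..<m}. cc (p i))"
        using sum_strict_mono_ex1[of "{0..<m}" rr "\<lambda>i. cc (p i)"] le by blast
      thus False using s1 s2 by simp
    qed
    show "p = p0"
    proof
      fix i show "p i = p0 i"
      proof (cases "i < m")
        case True
        have "cc (p i) = cc (p0 i)" using eqs P0c True by simp
        thus ?thesis using cinj pim[OF True] P0c(2)[OF True] by (meson atLeastLessThan_iff inj_onD le0)
      next
        case False
        thus ?thesis using permutes_not_in[OF pp] unfolding p0_def by simp
      qed
    qed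
  qed
  let ?P = "{p. p permutes {0..<m}}"
  let ?g = "\<lambda>p. of_int (sign p) * (\<Prod>i = 0..<m. ?M $$ (i, p i))"
  have finP: "finite ?P" by (rule finite_permutations) simp
  have "det ?M = (\<Sum>p\<in>?P. ?g p)" unfolding det_def dr dc by simp
  also have "\<dots> = ?g p0 + (\<Sum>p\<in>?P - {p0}. ?g p)" using finP p0perm by (intro sum.remove) auto
  also have "(\<Sum>p\<in>?P - {p0}. ?g p) = 0"
  proof (rule sum.neutral, rule ballI)
    fix p assume p: "p \<in> ?P - {p0}"
    hence "\<exists>i<m. ?M $$ (i, p i) = 0" using UNIQ by blast
    hence "(\<Prod>i = 0..<m. ?M $$ (i, p i)) = 0" by (intro prod_zero) auto
    thus "?g p = 0" by simp
  qed
  also have "(\<Prod>i = 0..<m. ?M $$ (i, p0 i)) = (\<Prod>i = 0..<m. -1)"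
    using EQ P0c by (intro prod.cong) auto
  finally have dM: "det ?M = of_int (sign p0) * (-1) ^ m" by simp
  have unit: "det ?M * det ?M = 1"
  proof -
    have s1: "of_int (sign p0) * of_int (sign p0) = (1::zpoly)" by (rule sign_cases[of p0]) simp_all
    have a1: "((-1::zpoly) ^ m * (-1) ^ m) = 1" by (simp add: power_mult_distrib[symmetric])
    have "det ?M * det ?M = (of_int (sign p0) * of_int (sign p0)) * ((-1) ^ m * (-1) ^ m)" unfolding dM by (simp only: mult_ac)
    thus ?thesis unfolding s1 a1 by simp
  qed
  have mem: "det ?M \<in> minors ?L (n - 1)"
    unfolding minors_def using IS JS cI cJ unfolding m_def by (auto simp: gen_laplacian_def)
  have "q \<in> critical_ideal n E (n - 1)" for q
  proof -
    have "q = (\<Sum>x\<in>{det ?M}. (q * det ?M) * x)" using unit by (simp add: mult.assoc)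
    thus ?thesis unfolding critical_ideal_def ideal_gen_def using mem
      by (intro CollectI exI[of _ "{det ?M}"] exI[of _ "\<lambda>_. q * det ?M"]) auto
  qed
  thus ?thesis by auto
qed

declare add_bit_eq_xor[simp del] mult_bit_eq_and[simp del]

lemma ideal_not_univ:
  assumes "\<forall>m\<in>minors (gen_laplacian n E) j. ev x m = (0::bit)"
  shows "critical_ideal n E j \<noteq> UNIV"
proof
  assume "critical_ideal n E j = UNIV"
  hence "1 \<in> ideal_gen (minors (gen_laplacian n E) j)" unfolding critical_ideal_def by blast
  then obtain A c where A: "finite A" "A \<subseteq> minors (gen_laplacian n E) j" and one: "1 = (\<Sum>a\<in>A. c a * a)"
    unfolding ideal_gen_def by blast
  have "ev x (1::zpoly) = (\<Sum>a\<in>A. ev x (c a) * ev x a)" unfolding one by (simp add: ev_sum ev_mult)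
  also have "\<dots> = 0" using A assms by (intro sum.neutral) auto
  finally show False by simp
qed

lemma Lx_entry:
  assumes "r < n" "s < n"
  shows "map_mat (ev x) (gen_laplacian n E) $$ (r, s) = (if r = s then x r else if E r s then 1 else (0::bit))"
  using assms by (simp add: gen_laplacian_def ev_uminus)

lemma minor_ev:
  assumes I: "I \<subseteq> {0..<n}" and J: "J \<subseteq> {0..<n}"
  shows "ev x (det (submatrix (gen_laplacian n E) I J)) = det (submatrix (map_mat (ev x) (gen_laplacian n E)) I J)"
proof -
  let ?L = "gen_laplacian n E"
  have "map_mat (ev x) (submatrix ?L I J) = submatrix (map_mat (ev x) ?L) I J"
  proof (rule eq_matI)
    fix i j assume i: "i < dim_row (submatrix (map_mat (ev x) ?L) I J)" and j: "j < dim_col (submatrix (map_mat (ev x) ?L) I J)"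
    have ci: "i < card I" using i I by (simp add: dim_submatrix card_sub_le gen_laplacian_def)
    have cj: "j < card J" using j J by (simp add: dim_submatrix card_sub_le gen_laplacian_def)
    have pi: "pick I i < n" using pick_in_set[of i I] ci I by auto
    have pj: "pick J j < n" using pick_in_set[of j J] cj J by auto
    show "map_mat (ev x) (submatrix ?L I J) $$ (i, j) = submatrix (map_mat (ev x) ?L) I J $$ (i, j)"
      using i j pi pj I J by (simp add: submatrix_def dim_submatrix card_sub_le gen_laplacian_def)
  qed (auto simp: dim_submatrix)
  thus ?thesis using comm_ring_hom.hom_det[OF ev_hom, of x "submatrix ?L I J"] by simp
qed

lemma row_kern:
  assumes sg: "symg {0..<n} E" and k: "kern {0..<n} E x u" and r: "r < n"
  shows "(\<Sum>s<n. map_mat (ev x) (gen_laplacian n E) $$ (r, s) * u s) = 0"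
proof -
  have Err: "\<not> E r r" using sg r unfolding symg_def by auto
  have e1: "(\<Sum>s<n. map_mat (ev x) (gen_laplacian n E) $$ (r, s) * u s)
      = (\<Sum>s<n. (if s = r then x r * u s else 0) + (if E r s then u s else 0))"
    using r Err by (intro sum.cong) (auto simp: Lx_entry)
  have e2: "(\<Sum>s<n. if s = r then x r * u s else 0) = x r * u r"
    using r by (simp add: sum.delta')
  have e3: "(\<Sum>s<n. if E r s then u s else 0) = (\<Sum>s\<in>{0..<n}. if E r s then u s else 0)"
    by (simp only: atLeast0LessThan)
  have "x r * u r + (\<Sum>s\<in>{0..<n}. if E r s then u s else 0) = 0" using k r unfolding kern_def by auto
  thus ?thesis unfolding e1 sum.distrib e2 e3 .
qed

lemma kern_add: "kern V E x u \<Longrightarrow> kern V E x w \<Longrightarrow> kern V E x (\<lambda>r. u r + w r)"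
  unfolding kern_def
proof
  fix r assume ku: "\<forall>r\<in>V. x r * u r + (\<Sum>s\<in>V. if E r s then u s else 0) = 0"
    and kw: "\<forall>r\<in>V. x r * w r + (\<Sum>s\<in>V. if E r s then w s else 0) = 0" and r: "r \<in> V"
  have "(\<Sum>s\<in>V. if E r s then u s + w s else 0) = (\<Sum>s\<in>V. if E r s then u s else 0) + (\<Sum>s\<in>V. if E r s then w s else 0)"
    unfolding sum.distrib[symmetric] by (rule sum.cong) auto
  hence "x r * (u r + w r) + (\<Sum>s\<in>V. if E r s then u s + w s else 0)
     = (x r * u r + (\<Sum>s\<in>V. if E r s then u s else 0)) + (x r * w r + (\<Sum>s\<in>V. if E r s then w s else 0))"
    by (simp add: algebra_simps)
  thus "x r * (u r + w r) + (\<Sum>s\<in>V. if E r s then u s + w s else 0) = 0"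
    using ku kw r by simp
qed

lemma J_minus_one:
  assumes J: "J \<subseteq> {0..<n}" and c: "card J = n - 1" and n: "n \<ge> 1"
  shows "\<exists>j0<n. J = {0..<n} - {j0}"
proof -
  have "J \<noteq> {0..<n}" using c n by auto
  then obtain j0 where j0: "j0 \<in> {0..<n}" "j0 \<notin> J" using J by blast
  have "J \<subseteq> {0..<n} - {j0}" using J j0 by auto
  moreover have "card ({0..<n} - {j0}) = card J" using j0 c by simp
  ultimately have "J = {0..<n} - {j0}" by (intro card_subset_eq) auto
  thus ?thesis using j0 by auto
qed

lemma bit_sum_ne: "(a::bit) \<noteq> b \<Longrightarrow> a + b \<noteq> 0"
  by (cases a; cases b; simp)

lemma good_minors:
  assumes sg: "symg {0..<n} E" and g: "good {0..<n} E"
  shows "critical_ideal n E (n - 1) \<noteq> UNIV"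
proof -
  obtain x u w where ku: "kern {0..<n} E x u" and kw: "kern {0..<n} E x w"
    and nu: "\<exists>r\<in>{0..<n}. u r \<noteq> 0" and nw: "\<exists>r\<in>{0..<n}. w r \<noteq> 0" and nuw: "\<exists>r\<in>{0..<n}. u r \<noteq> w r"
    using g unfolding good_def by blast
  have n: "n \<ge> 1" using nu by auto
  let ?L = "gen_laplacian n E"
  let ?Lx = "map_mat (ev x) ?L"
  have Lx: "?Lx \<in> carrier_mat n n" by (simp add: gen_laplacian_def)
  show ?thesis
  proof (rule ideal_not_univ[of n E "n - 1" x], intro ballI)
    fix m assume "m \<in> minors ?L (n - 1)"
    then obtain I J where m: "m = det (submatrix ?L I J)" and I: "I \<subseteq> {0..<n}" and J: "J \<subseteq> {0..<n}"
      and cI: "card I = n - 1" and cJ: "card J = n - 1"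
      unfolding minors_def by (auto simp: gen_laplacian_def)
    obtain j0 where j0: "j0 < n" and Jeq: "J = {0..<n} - {j0}" using J_minus_one[OF J cJ n] by blast
    have "\<exists>z. kern {0..<n} E x z \<and> z j0 = 0 \<and> (\<exists>r\<in>{0..<n}. z r \<noteq> 0)"
    proof (cases "u j0 = 0")
      case True thus ?thesis using ku nu by blast
    next
      case F1: False
      show ?thesis
      proof (cases "w j0 = 0")
        case True thus ?thesis using kw nw by blast
      next
        case False
        have "u j0 = 1" "w j0 = 1" using F1 False by simp_all
        moreover obtain r where "r \<in> {0..<n}" "u r \<noteq> w r" using nuw by blast
        ultimately obtain r where r: "r \<in> {0..<n}" "u r \<noteq> w r" "u j0 = 1" "w j0 = 1" by blast
        have "kern {0..<n} E x (\<lambda>r. u r + w r)" by (rule kern_add[OF ku kw])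
        moreover have "u j0 + w j0 = 0" using r by simp
        moreover have "u r + w r \<noteq> 0" using bit_sum_ne r by blast
        ultimately show ?thesis using r(1) by (intro exI[of _ "\<lambda>r. u r + w r"]) blast
      qed
    qed
    then obtain z where kz: "kern {0..<n} E x z" and zj0: "z j0 = 0" and znz: "\<exists>r\<in>{0..<n}. z r \<noteq> 0" by blast
    have "det (submatrix ?Lx I J) = 0"
    proof (rule det_vanish[OF Lx _ I J])
      show "\<forall>r<n. (\<Sum>s<n. ?Lx $$ (r, s) * z s) = 0" using row_kern[OF sg kz] by blast
      show "card I = card J" using cI cJ by simp
      show "\<forall>s<n. s \<notin> J \<longrightarrow> z s = 0" using Jeq zj0 by auto
      show "\<exists>s\<in>J. z s \<noteq> 0" using znz zj0 Jeq by (metis DiffI singletonD)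
    qed
    thus "ev x m = 0" unfolding m minor_ev[OF I J] .
  qed
qed

lemma lap_minors:
  assumes sg: "symg {0..<n} E" and n: "n \<ge> 1"
  shows "critical_ideal n E n \<noteq> UNIV"
proof -
  let ?x = "\<lambda>r. (\<Sum>s\<in>{0..<n}. if E r s then 1 else 0) :: bit"
  let ?L = "gen_laplacian n E"
  let ?Lx = "map_mat (ev ?x) ?L"
  have Lx: "?Lx \<in> carrier_mat n n" by (simp add: gen_laplacian_def)
  have kz: "kern {0..<n} E ?x (\<lambda>_. 1)" unfolding kern_def by simp
  show ?thesis
  proof (rule ideal_not_univ[of n E n ?x], intro ballI)
    fix m assume "m \<in> minors ?L n"
    then obtain I J where m: "m = det (submatrix ?L I J)" and I: "I \<subseteq> {0..<n}" and J: "J \<subseteq> {0..<n}"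
      and cI: "card I = n" and cJ: "card J = n"
      unfolding minors_def by (auto simp: gen_laplacian_def)
    have Jeq: "J = {0..<n}" using J cJ by (intro card_subset_eq) auto
    have "det (submatrix ?Lx I J) = 0"
    proof (rule det_vanish[OF Lx _ I J])
      show "\<forall>r<n. (\<Sum>s<n. ?Lx $$ (r, s) * 1) = 0" using row_kern[OF sg kz] by simp
      show "card I = card J" using cI cJ by simp
      show "\<forall>s<n. s \<notin> J \<longrightarrow> (1::bit) = 0" using Jeq by auto
      show "\<exists>s\<in>J. (1::bit) \<noteq> 0" using Jeq n by (intro bexI[of _ 0]) auto
    qed
    thus "ev ?x m = 0" unfolding m minor_ev[OF I J] .
  qed
qed

lemma big_minors:
  assumes "j > n" shows "critical_ideal n E j \<noteq> UNIV"
proof -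
  have "minors (gen_laplacian n E) j = {}"
  proof -
    { fix I :: "nat set" assume "I \<subseteq> {0..<n}" "card I = j"
      hence "card I \<le> n" using card_mono[of "{0..<n}" I] by auto
      hence False using assms \<open>card I = j\<close> by simp }
    thus ?thesis unfolding minors_def by (auto simp: gen_laplacian_def)
  qed
  thus ?thesis using ideal_not_univ[of n E j "\<lambda>_. 0::bit"] by simp
qed

lemma zero_minors: "critical_ideal n E 0 = UNIV"
proof -
  have "det (submatrix (gen_laplacian n E) {} {}) \<in> minors (gen_laplacian n E) 0"
    unfolding minors_def by fastforce
  moreover have "det (submatrix (gen_laplacian n E) {} {}) = 1"
    by (simp add: submatrix_def det_def)
  ultimately have one: "1 \<in> minors (gen_laplacian n E) 0" by simp
  have "p \<in> critical_ideal n E 0" for p :: zpoly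
    unfolding critical_ideal_def ideal_gen_def
    using one by (intro CollectI exI[of _ "{1}"] exI[of _ "\<lambda>_. p"]) simp
  thus ?thesis by auto
qed

theorem corollary3p9:
  fixes n :: nat and E :: "nat \<Rightarrow> nat \<Rightarrow> bool"
  assumes "simple_graph n E"
  shows "alg_corank n E = n - 1 \<longleftrightarrow> graph_iso n E path_graph"
proof -
  have sg: "symg {0..<n} E" using assms unfolding simple_graph_def symg_def by auto
  have iso_eq: "graph_iso n E path_graph \<longleftrightarrow> piso {0..<n} E" unfolding graph_iso_def piso_def by auto
  let ?P = "\<lambda>j. critical_ideal n E j = UNIV"
  have bound: "\<And>j. ?P j \<Longrightarrow> j \<le> n" using big_minors by (meson not_le)
  have P0: "?P 0" by (rule zero_minors)
  show ?thesis
  proof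
    assume h: "alg_corank n E = n - 1"
    have "?P (alg_corank n E)" unfolding alg_corank_def by (rule GreatestI_nat[of ?P 0 n, OF P0 bound])
    hence "?P (n - 1)" using h by simp
    hence "\<not> good {0..<n} E" using good_minors[OF sg] by blast
    hence "piso {0..<n} E" using core[of "{0..<n}" E] sg by simp
    thus "graph_iso n E path_graph" using iso_eq by simp
  next
    assume iso: "graph_iso n E path_graph"
    have top: "?P (n - 1)"
    proof (cases "n \<ge> 1")
      case True thus ?thesis using path_minor[OF sg iso] by simp
    next
      case False thus ?thesis using zero_minors by simp
    qed
    have le: "j \<le> n - 1" if pj: "?P j" for j
    proof (rule ccontr)
      assume "\<not> j \<le> n - 1"
      hence "j > n \<or> (j = n \<and> n \<ge> 1)" by auto
      thus False
      proof
        assume "j > n" thus False using big_minors pj by blast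
      next
        assume "j = n \<and> n \<ge> 1" thus False using lap_minors[OF sg] pj by blast
      qed
    qed
    show "alg_corank n E = n - 1" unfolding alg_corank_def by (rule Greatest_equality[of ?P "n - 1", OF top le])
  qed
qed

end
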